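(* Let $\delta\in(0,1)$ and $0<\rho<(1-\delta)/2$, and let $G\sim G(n,p)$ with $p=n^{\delta-1}$. Then with probability at least $1-\exp(-\frac14 n^{\delta})$, for every set $S$ of $n^{\rho}$ vertices of $G$, the number of vertices having no neighbor in $S$ is at least $n-2n^{\delta+\rho}$.
   Context: $G(n,p)$ is the Erdős–Rényi random graph on $n$ vertices with edge probability $p$. *)

theory Defs
  imports "HOL-Probability.Probability"
begin

definition all_edges :: "nat \<Rightarrow> nat set set" where
  "all_edges n = {{u, v} | u v. u < n \<and> v < n \<and> u \<noteq> v}"

text \<open>Erdos-Renyi random graph G(n,p): a random graph is the indicator function of its
  edge set; each potential edge is present independently with probability p.\<close>
definition gnp :: "nat \<Rightarrow> real \<Rightarrow> (nat set \<Rightarrow> bool) pmf" where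
  "gnp n p = Pi_pmf (all_edges n) False (\<lambda>_. bernoulli_pmf p)"

definition adj :: "(nat set \<Rightarrow> bool) \<Rightarrow> nat \<Rightarrow> nat \<Rightarrow> bool" where
  "adj G u v \<longleftrightarrow> u \<noteq> v \<and> G {u, v}"

end

theory Submission imports Defs "HOL-Real_Asymp.Real_Asymp" begin

lemma binom_tail:
  fixes m :: nat and p \<mu> :: real
  assumes p: "p \<in> {0..1}" and mp: "real m * p \<le> \<mu>" and mu: "0 \<le> \<mu>"
  shows "measure_pmf.prob (binomial_pmf m p) {j. real j > 2 * \<mu>} \<le> exp (- \<mu> / 3)"
proof -
  let ?B = "binomial_pmf m p"
  have "measure_pmf.prob ?B {j. real j > 2 * \<mu>} = measure_pmf.prob ?B ({j. real j > 2 * \<mu>} \<inter> set_pmf ?B)"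
    by (simp add: measure_Int_set_pmf)
  also have "\<dots> \<le> measure_pmf.prob ?B {j\<in>{..m}. real j > 2 * \<mu>}"
    using p by (intro measure_pmf.finite_measure_mono) (auto simp: set_pmf_binomial_eq)
  also have "\<dots> = (\<Sum>j\<in>{j\<in>{..m}. real j > 2 * \<mu>}. pmf ?B j)"
    by (simp add: measure_measure_pmf_finite)
  also have "\<dots> \<le> (\<Sum>j\<in>{j\<in>{..m}. real j > 2 * \<mu>}. pmf ?B j * (2 ^ j / 2 powr (2 * \<mu>)))"
  proof (intro sum_mono)
    fix j assume "j \<in> {j\<in>{..m}. real j > 2 * \<mu>}"
    hence "2 * \<mu> < real j" by auto
    hence "2 powr (2 * \<mu>) \<le> 2 powr (real j)" by (intro powr_mono) auto
    hence "1 \<le> 2 ^ j / 2 powr (2 * \<mu>)" by (simp add: powr_realpow)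
    thus "pmf ?B j \<le> pmf ?B j * (2 ^ j / 2 powr (2 * \<mu>))"
      using pmf_nonneg[of ?B j] by (metis mult_left_mono mult.right_neutral)
  qed
  also have "\<dots> \<le> (\<Sum>j\<le>m. pmf ?B j * (2 ^ j / 2 powr (2 * \<mu>)))"
    by (intro sum_mono2) auto
  also have "\<dots> = (\<Sum>j\<le>m. of_nat (m choose j) * (2 * p) ^ j * (1 - p) ^ (m - j)) / 2 powr (2 * \<mu>)"
    using p by (simp add: pmf_binomial sum_divide_distrib power_mult_distrib algebra_simps)
  also have "(\<Sum>j\<le>m. of_nat (m choose j) * (2 * p) ^ j * (1 - p) ^ (m - j)) = (2 * p + (1 - p)) ^ m"
    by (rule binomial_ring[symmetric])
  also have "(2 * p + (1 - p)) ^ m = (1 + p) ^ m" by (simp add: add.commute)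
  also have "\<dots> \<le> exp p ^ m"
    using p by (intro power_mono) (auto simp: add.commute exp_ge_add_one_self)
  also have "exp p ^ m = exp (real m * p)" by (simp add: exp_of_nat_mult)
  also have "2 powr (2 * \<mu>) = exp (2 * \<mu> * ln 2)" by (simp add: powr_def)
  also have "exp (real m * p) / exp (2 * \<mu> * ln 2) = exp (real m * p - 2 * \<mu> * ln 2)"
    by (simp add: exp_diff)
  also have "\<dots> \<le> exp (- \<mu> / 3)"
  proof -
    have "2/3 \<le> ln (2::real)" by (rule ln2_ge_two_thirds)
    hence "\<mu> * (2/3) \<le> \<mu> * ln 2" using mu by (intro mult_left_mono) auto
    thus ?thesis using mp by simp
  qed
  finally show ?thesis by (simp add: divide_right_mono)
qed

lemma finite_all_edges: "finite (all_edges n)"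
proof -
  have "all_edges n \<subseteq> Pow {..<n}" unfolding all_edges_def by auto
  thus ?thesis by (rule finite_subset) auto
qed

lemma deg_distr:
  fixes n u :: nat and p :: real
  assumes u: "u < n" and p: "p \<in> {0..1}"
  shows "measure_pmf.prob (gnp n p) {G. P (card {v\<in>{..<n}. adj G u v})}
       = measure_pmf.prob (binomial_pmf (n - 1) p) {j. P j}"
proof -
  define E where "E = (\<lambda>v. {u, v}) ` ({..<n} - {u})"
  have inj: "inj_on (\<lambda>v. {u, v}) ({..<n} - {u})"
    by (auto simp: inj_on_def doubleton_eq_iff)
  have finE: "finite E" unfolding E_def by auto
  have cardE: "card E = n - 1" unfolding E_def using u inj by (simp add: card_image)
  have sub: "E \<subseteq> all_edges n" unfolding E_def all_edges_def using u by auto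
  have deg: "card {v\<in>{..<n}. adj G u v} = card {e\<in>E. G e}" for G
  proof -
    have "{e\<in>E. G e} = (\<lambda>v. {u, v}) ` {v\<in>{..<n}. adj G u v}"
      unfolding E_def adj_def by auto
    moreover have "inj_on (\<lambda>v. {u, v}) {v\<in>{..<n}. adj G u v}"
      by (rule inj_on_subset[OF inj]) (auto simp: adj_def)
    ultimately show ?thesis by (simp add: card_image)
  qed
  have "binomial_pmf (n - 1) p = map_pmf (\<lambda>f. card {x\<in>E. f x}) (Pi_pmf E False (\<lambda>_. bernoulli_pmf p))"
    by (rule binomial_pmf_altdef') (use finE cardE p in auto)
  also have "Pi_pmf E False (\<lambda>_. bernoulli_pmf p) =
      map_pmf (\<lambda>f x. if x \<in> E then f x else False) (gnp n p)"
    unfolding gnp_def by (rule Pi_pmf_subset[OF finite_all_edges sub])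
  also have "map_pmf (\<lambda>f. card {x\<in>E. f x}) \<dots> = map_pmf (\<lambda>G. card {e\<in>E. G e}) (gnp n p)"
    by (simp add: map_pmf_comp) (intro map_pmf_cong refl arg_cong[where f=card], auto)
  finally have eq: "binomial_pmf (n - 1) p = map_pmf (\<lambda>G. card {e\<in>E. G e}) (gnp n p)" .
  show ?thesis by (simp only: eq measure_map_pmf vimage_def mem_Collect_eq deg)
qed

lemma nonnbr_bound:
  fixes G n S and c :: real
  assumes S: "S \<subseteq> {..<n}" and deg: "\<forall>u<n. real (card {v\<in>{..<n}. adj G u v}) \<le> c"
  shows "real (card {v\<in>{..<n}. \<forall>u\<in>S. \<not> adj G u v}) \<ge> real n - real (card S) * c"
proof -
  define A where "A = {v\<in>{..<n}. \<forall>u\<in>S. \<not> adj G u v}"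
  define B where "B = {v\<in>{..<n}. \<exists>u\<in>S. adj G u v}"
  have "A \<union> B = {..<n}" "A \<inter> B = {}" unfolding A_def B_def by auto
  hence "card A + card B = n"
    by (metis card_Un_disjoint card_lessThan finite_Un finite_lessThan)
  have finS: "finite S" using S finite_subset by blast
  have "B = (\<Union>u\<in>S. {v\<in>{..<n}. adj G u v})" unfolding B_def by auto
  hence "card B \<le> (\<Sum>u\<in>S. card {v\<in>{..<n}. adj G u v})"
    using card_UN_le[OF finS] by simp
  hence "real (card B) \<le> (\<Sum>u\<in>S. real (card {v\<in>{..<n}. adj G u v}))"
    by (metis of_nat_le_iff of_nat_sum)
  also have "\<dots> \<le> (\<Sum>u\<in>S. c)"
    using deg S by (intro sum_mono) auto
  also have "\<dots> = real (card S) * c" by simp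
  finally have cB: "real (card B) \<le> real (card S) * c" .
  have "real (card A) + real (card B) = real n"
    using \<open>card A + card B = n\<close> by (metis of_nat_add)
  thus ?thesis using cB unfolding A_def[symmetric] by linarith
qed

theorem lemmaC3:
  fixes \<delta> \<rho> :: real
  assumes "0 < \<delta>" "\<delta> < 1" "0 < \<rho>" "\<rho> < (1 - \<delta>) / 2"
  shows "\<exists>N. \<forall>n\<ge>N.
    measure_pmf.prob (gnp n (real n powr (\<delta> - 1)))
      {G. \<forall>S \<subseteq> {..<n}. real (card S) \<le> real n powr \<rho> \<longrightarrow>
            real (card {v \<in> {..<n}. \<forall>u\<in>S. \<not> adj G u v})
              \<ge> real n - 2 * real n powr (\<delta> + \<rho>)}
    \<ge> 1 - exp (- (1/4) * real n powr \<delta>)"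
proof -
  have "eventually (\<lambda>n::nat. ln (real n) \<le> real n powr \<delta> / 12) at_top"
    using assms(1) by real_asymp
  then obtain N0 where N0: "\<And>n. n \<ge> N0 \<Longrightarrow> ln (real n) \<le> real n powr \<delta> / 12"
    by (auto simp: eventually_at_top_linorder)
  show ?thesis
  proof (intro exI[of _ "max N0 1"] allI impI)
    fix n :: nat assume n: "max N0 1 \<le> n"
    hence n1: "1 \<le> n" and lnn: "ln (real n) \<le> real n powr \<delta> / 12" using N0 by auto
    define p where "p = real n powr (\<delta> - 1)"
    define \<mu> where "\<mu> = real n powr \<delta>"
    have mu0: "0 \<le> \<mu>" unfolding \<mu>_def by simp
    have "real n powr (\<delta> - 1) \<le> real n powr 0"
      using n1 assms by (intro powr_mono) auto
    hence p01: "p \<in> {0..1}" unfolding p_def using n1 by auto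
    have "real n * p = \<mu>" unfolding p_def \<mu>_def using n1
      by (simp add: powr_mult_base)
    hence mp: "real (n - 1) * p \<le> \<mu>" using p01 n1 by (simp add: of_nat_diff algebra_simps)
    define Bad where "Bad = (\<Union>u\<in>{..<n}. {G. 2 * \<mu> < real (card {v\<in>{..<n}. adj G u v})})"
    have "measure_pmf.prob (gnp n p) Bad
        \<le> (\<Sum>u\<in>{..<n}. measure_pmf.prob (gnp n p) {G. 2 * \<mu> < real (card {v\<in>{..<n}. adj G u v})})"
      unfolding Bad_def by (intro measure_pmf.finite_measure_subadditive_finite) auto
    also have "\<dots> = (\<Sum>u\<in>{..<n}. measure_pmf.prob (binomial_pmf (n - 1) p) {j. 2 * \<mu> < real j})"
      by (intro sum.cong refl deg_distr[OF _ p01]) auto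
    also have "\<dots> \<le> (\<Sum>u\<in>{..<n}. exp (- \<mu> / 3))"
      by (intro sum_mono binom_tail[OF p01 mp mu0])
    also have "\<dots> = real n * exp (- \<mu> / 3)" by simp
    also have "\<dots> = exp (ln (real n) + (- \<mu> / 3))"
      using n1 by (simp only: exp_add exp_ln of_nat_0_less_iff)
    also have "\<dots> \<le> exp (- (1/4) * \<mu>)"
      using lnn unfolding \<mu>_def by (subst exp_le_cancel_iff) linarith
    finally have bad: "measure_pmf.prob (gnp n p) Bad \<le> exp (- (1/4) * \<mu>)" .
    have sub: "UNIV - Bad \<subseteq> {G. \<forall>S \<subseteq> {..<n}. real (card S) \<le> real n powr \<rho> \<longrightarrow>
            real (card {v \<in> {..<n}. \<forall>u\<in>S. \<not> adj G u v})
              \<ge> real n - 2 * real n powr (\<delta> + \<rho>)}" (is "_ \<subseteq> ?Good")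
    proof (safe)
      fix G S assume G: "G \<notin> Bad" and S: "S \<subseteq> {..<n}" and cS: "real (card S) \<le> real n powr \<rho>"
      have "\<forall>u<n. real (card {v\<in>{..<n}. adj G u v}) \<le> 2 * \<mu>"
        using G unfolding Bad_def by (auto simp: not_less)
      from nonnbr_bound[OF S this]
      have "real n - real (card S) * (2 * \<mu>) \<le> real (card {v\<in>{..<n}. \<forall>u\<in>S. \<not> adj G u v})" .
      moreover have "real (card S) * (2 * \<mu>) \<le> real n powr \<rho> * (2 * \<mu>)"
        using cS mu0 by (intro mult_right_mono) auto
      moreover have "real n powr \<rho> * (2 * \<mu>) = 2 * real n powr (\<delta> + \<rho>)"
        unfolding \<mu>_def by (simp add: powr_add)
      ultimately show "real n - 2 * real n powr (\<delta> + \<rho>) \<le> real (card {v\<in>{..<n}. \<forall>u\<in>S. \<not> adj G u v})"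
        by linarith
    qed
    have "1 - exp (- (1/4) * \<mu>) \<le> 1 - measure_pmf.prob (gnp n p) Bad" using bad by simp
    also have "\<dots> = measure_pmf.prob (gnp n p) (UNIV - Bad)"
      using measure_pmf.prob_compl[of Bad "gnp n p"] by simp
    also have "\<dots> \<le> measure_pmf.prob (gnp n p) ?Good"
      by (intro measure_pmf.finite_measure_mono sub) auto
    finally show "measure_pmf.prob (gnp n (real n powr (\<delta> - 1))) ?Good \<ge> 1 - exp (- (1/4) * real n powr \<delta>)"
      unfolding p_def \<mu>_def .
  qed
qed
end
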